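(* Assume $\pi\ge0$ and that the manufacturer reports truthfully, i.e. $\mathbf r=\mathbf r^{id}$ (the identity matrix), so $\hat\Phi_t=\Phi_t$ for all $t$. Then, for every $j$, almost surely $$\bar D_{j,t}\to\sqrt\alpha\,h_{jj}=\frac{\phi_j-\alpha(C_s+C_m)}{4}.$$ Moreover, the manufacturer's revenue rate satisfies, almost surely, $$\lim_{t\to\infty}\frac1t\sum_{s\le t}D_s\,(P_s-Q_s-C_m)=\frac{1}{16\alpha}\sum_{i=1}^L\sigma_i\big(\phi_i-\alpha(C_s+C_m)\big)^2 .$$ This limit does not depend on $\pi$.
   Context: Supply-chain model. The parameters are a price-sensitivity $\alpha\in(0,1]$, a manufacturer's per-unit production cost $C_m\ge0$, and a supplier's per-unit procurement cost $C_s\ge0$. For $x\in\mathbb R$ write $x^+=\max\{0,x\}$. The market potential takes values $\phi_1<\dots<\phi_L$ with probabilities $\sigma_1,\dots,\sigma_L>0$ summing to $1$, and $\phi_1>\alpha(C_s+C_m)$. Set $$h_{ij}=\frac{2\phi_i-\phi_j-\alpha(C_m+C_s)}{4\sqrt\alpha},\qquad q^*(\phi)=\frac{\phi+\alpha(C_s-C_m)}{2\alpha}.$$ Dynamic system. Let $\mathbf r=(r_{ij})$ be an $L\times L$ stochastic matrix. The pairs $(\Phi_t,\hat\Phi_t)$, $t=1,2,\dots$, are i.i.d. with $P(\Phi_t=\phi_i,\hat\Phi_t=\phi_j)=\sigma_i r_{ij}$. Here $\Phi_t$ is the true potential in slot $t$ and $\hat\Phi_t$ is the reported one. The noises $\{\mathcal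 N_t\}$ are i.i.d., bounded, have zero mean, and are independent of $\{(\Phi_t,\hat\Phi_t)\}$. Fix a penalty parameter $\pi$ and, for each $j$, an arbitrary initial value $\bar D_{j,0}\in\mathbb R$. For $t\ge1$, define $\bar D_{j,t}$ as the average of $D_s$ over the slots $s\le t$ with $\hat\Phi_s=\phi_j$, namely $$\bar D_{j,t}=\frac{\sum_{s\le t}D_s\mathbf 1\{\hat\Phi_s=\phi_j\}}{\sum_{s\le t}\mathbf 1\{\hat\Phi_s=\phi_j\}}.$$ If no such slot exists yet, set $\bar D_{j,t}=\bar D_{j,0}$. In slot $t$, if $\hat\Phi_t=\phi_j$, the supplier quotes $$Q_t=q^*(\phi_j)+2\pi\big(\bar D_{j,t-1}-\sqrt\alpha\,h_{jj}\big).$$ The manufacturer then sets $$P_t=\frac{\Phi_t+\alpha(Q_t+C_m)}{2\alpha},$$ and the realized demand is $$D_t=(\Phi_t-\alpha P_t)^++\mathcal N_t .$$ *)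

theory Defs
  imports "HOL-Probability.Probability"
begin

text \<open>Slots are indexed from 0: the paper's slot t (t = 1,2,...) is slot t-1 here,
  so "the first t slots" are the slots s < t.\<close>

definition qstar :: "real \<Rightarrow> real \<Rightarrow> real \<Rightarrow> real \<Rightarrow> real" where
  "qstar \<alpha> Cm Cs x = (x + \<alpha> * (Cs - Cm)) / (2 * \<alpha>)"

text \<open>h_ij = hc alpha Cm Cs (phi i) (phi j)\<close>
definition hc :: "real \<Rightarrow> real \<Rightarrow> real \<Rightarrow> real \<Rightarrow> real \<Rightarrow> real" where
  "hc \<alpha> Cm Cs x y = (2 * x - y - \<alpha> * (Cm + Cs)) / (4 * sqrt \<alpha>)"

definition r_id :: "nat \<Rightarrow> nat \<Rightarrow> real" where
  "r_id i j = (if i = j then 1 else 0)"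

definition rep_index :: "(nat \<Rightarrow> real) \<Rightarrow> nat \<Rightarrow> real \<Rightarrow> nat" where
  "rep_index \<phi> L v = (THE j. j \<in> {1..L} \<and> \<phi> j = v)"

definition Dbar :: "(nat \<Rightarrow> real) \<Rightarrow> (nat \<Rightarrow> real) \<Rightarrow> (nat \<Rightarrow> real) \<Rightarrow> (nat \<Rightarrow> real)
    \<Rightarrow> nat \<Rightarrow> nat \<Rightarrow> real" where
  "Dbar \<phi> D0 phh D j t =
     (if {s. s < t \<and> phh s = \<phi> j} = {} then D0 j
      else (\<Sum>s\<in>{s. s < t \<and> phh s = \<phi> j}. D s) / real (card {s. s < t \<and> phh s = \<phi> j}))"

definition quote :: "real \<Rightarrow> real \<Rightarrow> real \<Rightarrow> real \<Rightarrow> (nat \<Rightarrow> real) \<Rightarrow> nat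
    \<Rightarrow> (nat \<Rightarrow> real) \<Rightarrow> real \<Rightarrow> real" where
  "quote \<alpha> Cm Cs \<pi> \<phi> L Db v =
     (let j = rep_index \<phi> L v in
      qstar \<alpha> Cm Cs (\<phi> j) + 2 * \<pi> * (Db j - sqrt \<alpha> * hc \<alpha> Cm Cs (\<phi> j) (\<phi> j)))"

definition price :: "real \<Rightarrow> real \<Rightarrow> real \<Rightarrow> real \<Rightarrow> real" where
  "price \<alpha> Cm x q = (x + \<alpha> * (q + Cm)) / (2 * \<alpha>)"

definition demand :: "real \<Rightarrow> real \<Rightarrow> real \<Rightarrow> real \<Rightarrow> real" where
  "demand \<alpha> x p nz = max 0 (x - \<alpha> * p) + nz"

text \<open>List of the demands of the first t slots, given sample paths ph (true potential),
  phh (reported potential), n (noise).\<close>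
fun dem_list :: "real \<Rightarrow> real \<Rightarrow> real \<Rightarrow> real \<Rightarrow> (nat \<Rightarrow> real) \<Rightarrow> nat \<Rightarrow> (nat \<Rightarrow> real)
    \<Rightarrow> (nat \<Rightarrow> real) \<Rightarrow> (nat \<Rightarrow> real) \<Rightarrow> (nat \<Rightarrow> real) \<Rightarrow> nat \<Rightarrow> real list" where
  "dem_list \<alpha> Cm Cs \<pi> \<phi> L D0 ph phh n 0 = []"
| "dem_list \<alpha> Cm Cs \<pi> \<phi> L D0 ph phh n (Suc t) =
     (let ds = dem_list \<alpha> Cm Cs \<pi> \<phi> L D0 ph phh n t;
          q = quote \<alpha> Cm Cs \<pi> \<phi> L (\<lambda>j. Dbar \<phi> D0 phh (\<lambda>s. ds ! s) j t) (phh t)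
      in ds @ [demand \<alpha> (ph t) (price \<alpha> Cm (ph t) q) (n t)])"

definition Dseq :: "real \<Rightarrow> real \<Rightarrow> real \<Rightarrow> real \<Rightarrow> (nat \<Rightarrow> real) \<Rightarrow> nat \<Rightarrow> (nat \<Rightarrow> real)
    \<Rightarrow> (nat \<Rightarrow> real) \<Rightarrow> (nat \<Rightarrow> real) \<Rightarrow> (nat \<Rightarrow> real) \<Rightarrow> nat \<Rightarrow> real" where
  "Dseq \<alpha> Cm Cs \<pi> \<phi> L D0 ph phh n t = dem_list \<alpha> Cm Cs \<pi> \<phi> L D0 ph phh n (Suc t) ! t"

definition Qseq :: "real \<Rightarrow> real \<Rightarrow> real \<Rightarrow> real \<Rightarrow> (nat \<Rightarrow> real) \<Rightarrow> nat \<Rightarrow> (nat \<Rightarrow> real)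
    \<Rightarrow> (nat \<Rightarrow> real) \<Rightarrow> (nat \<Rightarrow> real) \<Rightarrow> (nat \<Rightarrow> real) \<Rightarrow> nat \<Rightarrow> real" where
  "Qseq \<alpha> Cm Cs \<pi> \<phi> L D0 ph phh n t =
     quote \<alpha> Cm Cs \<pi> \<phi> L (\<lambda>j. Dbar \<phi> D0 phh (Dseq \<alpha> Cm Cs \<pi> \<phi> L D0 ph phh n) j t) (phh t)"

definition Pseq :: "real \<Rightarrow> real \<Rightarrow> real \<Rightarrow> real \<Rightarrow> (nat \<Rightarrow> real) \<Rightarrow> nat \<Rightarrow> (nat \<Rightarrow> real)
    \<Rightarrow> (nat \<Rightarrow> real) \<Rightarrow> (nat \<Rightarrow> real) \<Rightarrow> (nat \<Rightarrow> real) \<Rightarrow> nat \<Rightarrow> real" where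
  "Pseq \<alpha> Cm Cs \<pi> \<phi> L D0 ph phh n t =
     price \<alpha> Cm (ph t) (Qseq \<alpha> Cm Cs \<pi> \<phi> L D0 ph phh n t)"

end

theory Submission
  imports Defs
begin


lemma growth:
  fixes a b :: "nat \<Rightarrow> real"
  assumes step: "\<And>t. t \<ge> N \<Longrightarrow> a (Suc t) \<le> a t + b t" and b: "b \<longlonglongrightarrow> 0"
    and nn: "\<And>t. 0 \<le> a t"
  shows "(\<lambda>t. a t / real t) \<longlonglongrightarrow> 0"
proof (rule LIMSEQ_I)
  fix r :: real assume r: "0 < r"
  from LIMSEQ_D[OF b, of "r/2"] r obtain M where M: "\<And>n. n \<ge> M \<Longrightarrow> \<bar>b n\<bar> < r/2" by auto
  define N1 where "N1 = max N M"
  have bound: "a t \<le> a N1 + (real t - real N1) * (r/2)" if "N1 \<le> t" for t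
    using that
  proof (induct t rule: dec_induct)
    case base then show ?case by simp
  next
    case (step n)
    have "a (Suc n) \<le> a n + b n" using assms(1)[of n] step(1) unfolding N1_def by auto
    moreover have "b n < r/2" using M[of n] step(1) unfolding N1_def by auto
    ultimately show ?case using step(3) by (simp add: field_simps)
  qed
  obtain K :: nat where K: "real K > 2 * a N1 / r" using reals_Archimedean2 by blast
  show "\<exists>no. \<forall>n\<ge>no. norm (a n / real n - 0) < r"
  proof (intro exI allI impI)
    fix n assume n: "max N1 (Suc K) \<le> n"
    then have n1: "N1 \<le> n" and nK: "real n > 2 * a N1 / r" and npos: "real n > 0" using K by auto
    have an: "a n \<le> a N1 + real n * (r/2)" proof -
      have "0 \<le> real N1 * (r/2)" using r by simp
      then have "(real n - real N1) * (r/2) \<le> real n * (r/2)" by (simp add: left_diff_distrib)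
      then show ?thesis using bound[OF n1] by linarith
    qed
    have "a N1 < real n * (r/2)" using nK r by (simp add: field_simps)
    then have "a n < real n * r" using an by linarith
    then have "a n / real n < r" using npos by (simp add: field_simps)
    then show "norm (a n / real n - 0) < r" using nn[of n] npos by simp
  qed
qed

lemma cesaro0:
  fixes h :: "nat \<Rightarrow> real"
  assumes "h \<longlonglongrightarrow> 0"
  shows "(\<lambda>t. (\<Sum>s<t. \<bar>h s\<bar>) / real t) \<longlonglongrightarrow> 0"
proof (rule growth[where N=0 and b="\<lambda>t. \<bar>h t\<bar>"])
  show "(\<lambda>t. \<bar>h t\<bar>) \<longlonglongrightarrow> 0" using assms tendsto_rabs_zero by blast
qed (auto intro: sum_nonneg)

lemma weighted_avg:
  fixes w g :: "nat \<Rightarrow> real"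
  assumes w: "(\<lambda>t. (\<Sum>s<t. w s) / real t) \<longlonglongrightarrow> \<omega>" and wb: "\<And>s. \<bar>w s\<bar> \<le> K"
    and g: "g \<longlonglongrightarrow> \<gamma>"
  shows "(\<lambda>t. (\<Sum>s<t. w s * g s) / real t) \<longlonglongrightarrow> \<omega> * \<gamma>"
proof -
  have c: "(\<lambda>t. (\<Sum>s<t. \<bar>g s - \<gamma>\<bar>) / real t) \<longlonglongrightarrow> 0"
    by (rule cesaro0) (use g in \<open>simp add: LIM_zero\<close>)
  have e: "\<bar>(\<Sum>s<t. w s * g s) / real t - (\<Sum>s<t. w s) / real t * \<gamma>\<bar>
       \<le> \<bar>K\<bar> * ((\<Sum>s<t. \<bar>g s - \<gamma>\<bar>) / real t)" for t
  proof -
    have "\<bar>(\<Sum>s<t. w s * g s) - (\<Sum>s<t. w s) * \<gamma>\<bar> = \<bar>\<Sum>s<t. w s * (g s - \<gamma>)\<bar>"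
      by (simp add: sum_distrib_left[symmetric] sum_subtractf right_diff_distrib mult.commute)
    also have "\<dots> \<le> (\<Sum>s<t. \<bar>w s * (g s - \<gamma>)\<bar>)" by (rule sum_abs)
    also have "\<dots> \<le> (\<Sum>s<t. \<bar>K\<bar> * \<bar>g s - \<gamma>\<bar>)"
    proof (intro sum_mono)
      fix s
      have "\<bar>w s\<bar> \<le> \<bar>K\<bar>" using wb[of s] by linarith
      then show "\<bar>w s * (g s - \<gamma>)\<bar> \<le> \<bar>K\<bar> * \<bar>g s - \<gamma>\<bar>"
        unfolding abs_mult by (rule mult_right_mono) simp
    qed
    finally have "\<bar>(\<Sum>s<t. w s * g s) - (\<Sum>s<t. w s) * \<gamma>\<bar> \<le> \<bar>K\<bar> * (\<Sum>s<t. \<bar>g s - \<gamma>\<bar>)"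
      by (simp add: sum_distrib_left)
    moreover have "(\<Sum>s<t. w s * g s) / real t - (\<Sum>s<t. w s) / real t * \<gamma> = ((\<Sum>s<t. w s * g s) - (\<Sum>s<t. w s) * \<gamma>) / real t"
      by (simp add: diff_divide_distrib)
    ultimately show ?thesis
      by (simp add: abs_divide divide_right_mono)
  qed
  have "(\<lambda>t. (\<Sum>s<t. w s * g s) / real t - (\<Sum>s<t. w s) / real t * \<gamma>) \<longlonglongrightarrow> 0"
  proof (rule tendsto_sandwich[where f="\<lambda>t. - (\<bar>K\<bar> * ((\<Sum>s<t. \<bar>g s - \<gamma>\<bar>) / real t))"
                              and h="\<lambda>t. \<bar>K\<bar> * ((\<Sum>s<t. \<bar>g s - \<gamma>\<bar>) / real t)"])
    show "\<forall>\<^sub>F n in sequentially. - (\<bar>K\<bar> * ((\<Sum>s<n. \<bar>g s - \<gamma>\<bar>) / real n)) \<le> (\<Sum>s<n. w s * g s) / real n - (\<Sum>s<n. w s) / real n * \<gamma>"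
      using e by (intro always_eventually allI) (smt (verit))
    show "\<forall>\<^sub>F n in sequentially. (\<Sum>s<n. w s * g s) / real n - (\<Sum>s<n. w s) / real n * \<gamma> \<le> \<bar>K\<bar> * ((\<Sum>s<n. \<bar>g s - \<gamma>\<bar>) / real n)"
      using e by (intro always_eventually allI) (smt (verit))
    show "(\<lambda>t. - (\<bar>K\<bar> * ((\<Sum>s<t. \<bar>g s - \<gamma>\<bar>) / real t))) \<longlonglongrightarrow> 0"
      using tendsto_minus[OF tendsto_mult_right_zero[OF c]] by simp
    show "(\<lambda>t. \<bar>K\<bar> * ((\<Sum>s<t. \<bar>g s - \<gamma>\<bar>) / real t)) \<longlonglongrightarrow> 0"
      using tendsto_mult_right_zero[OF c] by simp
  qed
  moreover have "(\<lambda>t. (\<Sum>s<t. w s) / real t * \<gamma>) \<longlonglongrightarrow> \<omega> * \<gamma>"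
    by (intro tendsto_mult w tendsto_const)
  ultimately have "(\<lambda>t. ((\<Sum>s<t. w s * g s) / real t - (\<Sum>s<t. w s) / real t * \<gamma>) + (\<Sum>s<t. w s) / real t * \<gamma>) \<longlonglongrightarrow> 0 + \<omega> * \<gamma>"
    by (rule tendsto_add)
  then show ?thesis by simp
qed




lemma dem_list_len: "length (dem_list \<alpha> Cm Cs \<pi> \<phi> L D0 ph phh n t) = t"
  by (induct t) (simp_all add: Let_def)

lemma dem_list_nth: "s < t \<Longrightarrow> dem_list \<alpha> Cm Cs \<pi> \<phi> L D0 ph phh n t ! s = Dseq \<alpha> Cm Cs \<pi> \<phi> L D0 ph phh n s"
proof (induct t)
  case 0 then show ?case by simp
next
  case (Suc t)
  show ?case
  proof (cases "s < t")
    case True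
    then show ?thesis using Suc by (simp add: Let_def nth_append dem_list_len)
  next
    case False
    then have "s = t" using Suc by simp
    then show ?thesis by (simp add: Dseq_def)
  qed
qed

lemma Dbar_cong: "(\<And>s. s < t \<Longrightarrow> D s = D' s) \<Longrightarrow> Dbar \<phi> D0 phh D j t = Dbar \<phi> D0 phh D' j t"
  unfolding Dbar_def by (intro if_cong refl arg_cong2[where f="(/)"] sum.cong) auto

lemma Dseq_eq: "Dseq \<alpha> Cm Cs \<pi> \<phi> L D0 ph phh n t =
   demand \<alpha> (ph t) (Pseq \<alpha> Cm Cs \<pi> \<phi> L D0 ph phh n t) (n t)"
proof -
  let ?ds = "dem_list \<alpha> Cm Cs \<pi> \<phi> L D0 ph phh n t"
  have "(\<lambda>j. Dbar \<phi> D0 phh (\<lambda>s. ?ds ! s) j t) = (\<lambda>j. Dbar \<phi> D0 phh (Dseq \<alpha> Cm Cs \<pi> \<phi> L D0 ph phh n) j t)"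
    by (intro ext Dbar_cong dem_list_nth)
  then show ?thesis
    unfolding Dseq_def Pseq_def Qseq_def by (simp add: Let_def nth_append dem_list_len)
qed

lemma hc_eq: "0 < \<alpha> \<Longrightarrow> sqrt \<alpha> * hc \<alpha> Cm Cs x x = (x - \<alpha> * (Cs + Cm)) / 4"
  unfolding hc_def by (simp add: field_simps)

lemma lin_aux:
  fixes Z x f d :: real
  assumes "\<bar>Z - x\<bar> \<le> \<bar>Z\<bar> + d" "0 \<le> d" "min 0 (- x) \<le> f \<and> f \<le> max 0 (- x)"
  shows "\<bar>Z + f\<bar> \<le> \<bar>Z\<bar> + d"
  using assms by (auto simp: abs_if min_def max_def split: if_splits)

lemma key_step:
  fixes Z W k c s :: real
  assumes k: "0 < k" "c \<le> k" and c: "0 \<le> c" and s: "0 \<le> s"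
  shows "\<bar>Z + (max 0 (s - c * ((Z + W) / k)) - s)\<bar> \<le> \<bar>Z\<bar> + c * \<bar>W\<bar> / k"
proof -
  define e where "e = (Z + W) / k"
  define f where "f = max 0 (s - c * e) - s"
  have fb: "min 0 (- c * e) \<le> f \<and> f \<le> max 0 (- c * e)"
    unfolding f_def using c s by (cases "e \<ge> 0") (auto simp: mult_nonneg_nonneg max_def min_def)
  define q where "q = (k - c) / k"
  have q: "0 \<le> q" "q \<le> 1" unfolding q_def using k c by auto
  have ze: "Z - c * e = q * Z - c * W / k"
    unfolding q_def e_def using k by (simp add: field_simps)
  have "\<bar>q * Z\<bar> \<le> \<bar>Z\<bar>" using q by (simp add: abs_mult mult_left_le_one_le)
  moreover have "\<bar>c * W / k\<bar> = c * \<bar>W\<bar> / k" using c k by (simp add: abs_mult abs_divide)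
  ultimately have "\<bar>Z - c * e\<bar> \<le> \<bar>Z\<bar> + c * \<bar>W\<bar> / k" unfolding ze using abs_triangle_ineq4[of "q*Z" "c*W/k"] by linarith
  moreover have "0 \<le> c * \<bar>W\<bar> / k" using c k by simp
  ultimately have "\<bar>Z + f\<bar> \<le> \<bar>Z\<bar> + c * \<bar>W\<bar> / k" using fb by (intro lin_aux[where x="c*e"]) (auto simp del: mult_minus_left)
  then show ?thesis unfolding f_def e_def .
qed

locale det =
  fixes \<alpha> Cm Cs \<pi> :: real and \<phi> :: "nat \<Rightarrow> real" and L :: nat
    and D0 ph n \<sigma> :: "nat \<Rightarrow> real" and B :: real
  assumes alpha: "0 < \<alpha>" and costs: "0 \<le> Cm" "0 \<le> Cs" and mono: "strict_mono_on {1..L} \<phi>"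
    and phi1: "\<phi> 1 > \<alpha> * (Cs + Cm)" and pi: "0 \<le> \<pi>"
    and ph_in: "\<And>s. \<exists>j\<in>{1..L}. ph s = \<phi> j"
    and nb: "\<And>s. \<bar>n s\<bar> \<le> B"
    and sig: "\<And>j. j \<in> {1..L} \<Longrightarrow> 0 < \<sigma> j"
    and cnt: "\<And>j. j \<in> {1..L} \<Longrightarrow> (\<lambda>t. (\<Sum>s<t. if ph s = \<phi> j then 1 else 0) / real t) \<longlonglongrightarrow> \<sigma> j"
    and nz: "\<And>j. j \<in> {1..L} \<Longrightarrow> (\<lambda>t. (\<Sum>s<t. if ph s = \<phi> j then n s else 0) / real t) \<longlonglongrightarrow> 0"
begin

abbreviation D where "D \<equiv> Dseq \<alpha> Cm Cs \<pi> \<phi> L D0 ph ph n"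
abbreviation Db where "Db j t \<equiv> Dbar \<phi> D0 ph D j t"
definition sj where "sj j = (\<phi> j - \<alpha> * (Cs + Cm)) / 4"
definition c0 where "c0 = \<pi> * \<alpha>"

lemma c0_nn: "0 \<le> c0" unfolding c0_def using pi alpha by simp

lemma inj: "inj_on \<phi> {1..L}" using mono by (rule strict_mono_on_imp_inj_on)

lemma sj_pos: "j \<in> {1..L} \<Longrightarrow> 0 < sj j"
proof -
  assume j: "j \<in> {1..L}"
  have "\<phi> 1 \<le> \<phi> j"
  proof (cases "j = 1")
    case False
    then have "1 < j" using j by auto
    then show ?thesis using mono j unfolding strict_mono_on_def by (auto intro: less_imp_le)
  qed simp
  then show ?thesis using phi1 unfolding sj_def by simp
qed

lemma rep: "j \<in> {1..L} \<Longrightarrow> rep_index \<phi> L (\<phi> j) = j"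
  unfolding rep_index_def by (rule the_equality) (use inj in \<open>auto dest: inj_onD\<close>)

lemma QP:
  assumes j: "j \<in> {1..L}" and t: "ph t = \<phi> j"
  shows "Qseq \<alpha> Cm Cs \<pi> \<phi> L D0 ph ph n t = qstar \<alpha> Cm Cs (\<phi> j) + 2 * \<pi> * (Db j t - sj j)"
  unfolding Qseq_def quote_def using t rep[OF j] hc_eq[OF alpha] by (simp add: Let_def sj_def)

lemma D_eq:
  assumes j: "j \<in> {1..L}" and t: "ph t = \<phi> j"
  shows "D t = max 0 (sj j - c0 * (Db j t - sj j)) + n t"
proof -
  have "\<phi> j - \<alpha> * price \<alpha> Cm (\<phi> j) (qstar \<alpha> Cm Cs (\<phi> j) + 2 * \<pi> * (Db j t - sj j))
      = sj j - c0 * (Db j t - sj j)"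
    unfolding price_def qstar_def sj_def c0_def using alpha by (simp add: field_simps)
  then show ?thesis
    by (subst Dseq_eq) (simp add: demand_def Pseq_def QP[OF j t] t)
qed

lemma R_eq:
  assumes j: "j \<in> {1..L}" and t: "ph t = \<phi> j"
  shows "Pseq \<alpha> Cm Cs \<pi> \<phi> L D0 ph ph n t - Qseq \<alpha> Cm Cs \<pi> \<phi> L D0 ph ph n t - Cm
      = (sj j - c0 * (Db j t - sj j)) / \<alpha>"
  unfolding Pseq_def QP[OF j t] using alpha t
  by (simp add: price_def qstar_def sj_def c0_def field_simps)

end




context det begin

lemma Dbar_lim:
  assumes j: "j \<in> {1..L}"
  shows "(\<lambda>t. Db j t) \<longlonglongrightarrow> sj j"
proof -
  define I where "I s \<longleftrightarrow> ph s = \<phi> j" for s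
  define ct where "ct t = (\<Sum>s<t. if I s then 1 else 0 :: real)" for t
  define S where "S t = (\<Sum>s<t. if I s then D s else 0)" for t
  define W where "W t = (\<Sum>s<t. if I s then n s else 0)" for t
  define Z where "Z t = S t - ct t * sj j - W t" for t
  have sjp: "0 < sj j" using sj_pos[OF j] .
  have sg: "0 < \<sigma> j" using sig[OF j] .
  have ctlim: "(\<lambda>t. ct t / real t) \<longlonglongrightarrow> \<sigma> j" using cnt[OF j] unfolding ct_def I_def .
  have Wlim: "(\<lambda>t. W t / real t) \<longlonglongrightarrow> 0" using nz[OF j] unfolding W_def I_def .
  have set_eq: "{s. s < t \<and> ph s = \<phi> j} = {s \<in> {..<t}. I s}" for t unfolding I_def by auto
  have Db_eq: "Db j t = S t / ct t" if "ct t > 0" for t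
  proof -
    have "real (card {s \<in> {..<t}. I s}) = ct t"
      unfolding ct_def by (simp add: sum.inter_filter[symmetric])
    moreover have "(\<Sum>s\<in>{s \<in> {..<t}. I s}. D s) = S t"
      unfolding S_def by (rule sum.inter_filter) simp
    moreover have "{s \<in> {..<t}. I s} \<noteq> {}"
    proof
      assume "{s \<in> {..<t}. I s} = {}"
      then have "card {s \<in> {..<t}. I s} = 0" by (metis card.empty)
      then show False using that \<open>real (card {s \<in> {..<t}. I s}) = ct t\<close> by (simp del: Collect_empty_eq)
    qed
    ultimately show ?thesis unfolding Dbar_def set_eq by auto
  qed
  have ev1: "\<forall>\<^sub>F t in sequentially. ct t / real t > \<sigma> j / 2"
    using order_tendstoD(1)[OF ctlim, of "\<sigma> j / 2"] sg by linarith
  have ev2: "\<forall>\<^sub>F t in sequentially. real t > 2 * max 1 c0 / \<sigma> j"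
    by (rule eventually_sequentiallyI[of "nat \<lceil>2 * max 1 c0 / \<sigma> j\<rceil> + 1"]) linarith
  have evbig: "\<forall>\<^sub>F t in sequentially. ct t \<ge> max 1 c0"
    using ev1 ev2
  proof eventually_elim
    case (elim t)
    then have tp: "real t > 0" using sg by (smt (verit) divide_pos_pos)
    then have "ct t > real t * (\<sigma> j / 2)" using elim(1) by (simp add: field_simps)
    moreover have "real t * (\<sigma> j / 2) > max 1 c0" using elim(2) sg by (simp add: field_simps)
    ultimately show ?case by linarith
  qed
  then obtain T where T: "\<And>t. t \<ge> T \<Longrightarrow> ct t \<ge> max 1 c0"
    unfolding eventually_sequentially by auto
  have Zstep: "\<bar>Z (Suc t)\<bar> \<le> \<bar>Z t\<bar> + c0 * \<bar>W t\<bar> / ct t" if t: "t \<ge> T" for t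
  proof (cases "I t")
    case False
    then have "Z (Suc t) = Z t" unfolding Z_def S_def ct_def W_def by simp
    moreover have "0 \<le> c0 * \<bar>W t\<bar> / ct t" using T[OF t] c0_nn by simp
    ultimately show ?thesis by simp
  next
    case True
    have ctp: "ct t > 0" using T[OF t] by simp
    have Zs: "Z (Suc t) = Z t + (D t - sj j - n t)"
      unfolding Z_def S_def ct_def W_def using True by (simp add: algebra_simps)
    have "D t = max 0 (sj j - c0 * (Db j t - sj j)) + n t"
      using D_eq[OF j] True unfolding I_def by simp
    moreover have "Db j t - sj j = (Z t + W t) / ct t"
      using Db_eq[OF ctp] ctp unfolding Z_def by (simp add: field_simps)
    ultimately have "Z (Suc t) = Z t + (max 0 (sj j - c0 * ((Z t + W t) / ct t)) - sj j)"
      using Zs by simp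
    also have "\<bar>\<dots>\<bar> \<le> \<bar>Z t\<bar> + c0 * \<bar>W t\<bar> / ct t"
      by (rule key_step) (use ctp T[OF t] c0_nn sjp in auto)
    finally show ?thesis .
  qed
  have WctLim: "(\<lambda>t. W t / ct t) \<longlonglongrightarrow> 0"
  proof -
    have "(\<lambda>t. (W t / real t) / (ct t / real t)) \<longlonglongrightarrow> 0"
      using tendsto_divide[OF Wlim ctlim] sg by simp
    moreover have "\<forall>\<^sub>F t in sequentially. (W t / real t) / (ct t / real t) = W t / ct t"
      by (rule eventually_sequentiallyI[of 1]) simp
    ultimately show ?thesis by (auto intro: Lim_transform_eventually)
  qed
  have bl: "(\<lambda>t. c0 * \<bar>W t\<bar> / ct t) \<longlonglongrightarrow> 0"
  proof -
    have "(\<lambda>t. c0 * \<bar>W t / ct t\<bar>) \<longlonglongrightarrow> 0"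
      using tendsto_mult[OF tendsto_const[of c0] tendsto_rabs_zero[OF WctLim]] by simp
    moreover have "\<forall>\<^sub>F t in sequentially. c0 * \<bar>W t / ct t\<bar> = c0 * \<bar>W t\<bar> / ct t"
      using evbig by eventually_elim (simp add: abs_divide)
    ultimately show ?thesis by (auto intro: Lim_transform_eventually)
  qed
  have Zt: "(\<lambda>t. \<bar>Z t\<bar> / real t) \<longlonglongrightarrow> 0"
    by (rule growth[where N=T, OF Zstep bl]) auto
  have Zct: "(\<lambda>t. Z t / ct t) \<longlonglongrightarrow> 0"
  proof -
    have "(\<lambda>t. Z t / real t) \<longlonglongrightarrow> 0"
      using Zt tendsto_rabs_zero_iff[of "\<lambda>t. Z t / real t"] by (simp add: abs_divide)
    then have "(\<lambda>t. (Z t / real t) / (ct t / real t)) \<longlonglongrightarrow> 0"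
      using tendsto_divide[OF _ ctlim] sg by fastforce
    moreover have "\<forall>\<^sub>F t in sequentially. (Z t / real t) / (ct t / real t) = Z t / ct t"
      by (rule eventually_sequentiallyI[of 1]) simp
    ultimately show ?thesis by (auto intro: Lim_transform_eventually)
  qed
  have "(\<lambda>t. sj j + Z t / ct t + W t / ct t) \<longlonglongrightarrow> sj j"
    using tendsto_add[OF tendsto_add[OF tendsto_const[of "sj j"] Zct] WctLim] by simp
  moreover have "\<forall>\<^sub>F t in sequentially. sj j + Z t / ct t + W t / ct t = Db j t"
    using evbig
  proof eventually_elim
    case (elim t)
    then have ctp: "ct t > 0" by simp
    show ?case using Db_eq[OF ctp] ctp unfolding Z_def by (simp add: field_simps)
  qed
  ultimately show ?thesis by (auto intro: Lim_transform_eventually)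
qed

end




context det begin

lemma rev_lim:
  "(\<lambda>t. (\<Sum>s<t. D s * (Pseq \<alpha> Cm Cs \<pi> \<phi> L D0 ph ph n s - Qseq \<alpha> Cm Cs \<pi> \<phi> L D0 ph ph n s - Cm)) / real t)
     \<longlonglongrightarrow> (1 / (16 * \<alpha>)) * (\<Sum>i=1..L. \<sigma> i * (\<phi> i - \<alpha> * (Cs + Cm))\<^sup>2)"
proof -
  define u where "u j t = sj j - c0 * (Db j t - sj j)" for j t
  define w1 where "w1 j s = (if ph s = \<phi> j then 1 else 0 :: real)" for j s
  define w2 where "w2 j s = (if ph s = \<phi> j then n s else 0 :: real)" for j s
  define g1 where "g1 j s = max 0 (u j s) * u j s / \<alpha>" for j s
  define g2 where "g2 j s = u j s / \<alpha>" for j s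
  have ulim: "u j \<longlonglongrightarrow> sj j" if j: "j \<in> {1..L}" for j
  proof -
    have "(\<lambda>t. sj j - c0 * (Db j t - sj j)) \<longlonglongrightarrow> sj j - c0 * (sj j - sj j)"
      by (intro tendsto_intros Dbar_lim j)
    then show ?thesis unfolding u_def by simp
  qed
  have Bnn: "0 \<le> B" using nb[of 0] by simp
  have decomp: "D s * (Pseq \<alpha> Cm Cs \<pi> \<phi> L D0 ph ph n s - Qseq \<alpha> Cm Cs \<pi> \<phi> L D0 ph ph n s - Cm)
      = (\<Sum>j\<in>{1..L}. w1 j s * g1 j s + w2 j s * g2 j s)" for s
  proof -
    obtain j0 where j0: "j0 \<in> {1..L}" "ph s = \<phi> j0" using ph_in[of s] by blast
    have other: "w1 j s * g1 j s + w2 j s * g2 j s = 0" if "j \<in> {1..L} - {j0}" for j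
    proof -
      have "\<phi> j \<noteq> \<phi> j0" using that j0 inj by (auto dest: inj_onD)
      then show ?thesis unfolding w1_def w2_def using j0 by simp
    qed
    have "(\<Sum>j\<in>{1..L}. w1 j s * g1 j s + w2 j s * g2 j s)
        = (w1 j0 s * g1 j0 s + w2 j0 s * g2 j0 s) + (\<Sum>j\<in>{1..L} - {j0}. w1 j s * g1 j s + w2 j s * g2 j s)"
      using j0 by (simp add: sum.remove)
    also have "(\<Sum>j\<in>{1..L} - {j0}. w1 j s * g1 j s + w2 j s * g2 j s) = 0"
      using other by (rule sum.neutral[OF ballI])
    also have "w1 j0 s * g1 j0 s + w2 j0 s * g2 j0 s = (max 0 (u j0 s) + n s) * (u j0 s / \<alpha>)"
      unfolding w1_def w2_def g1_def g2_def using j0 by (simp add: algebra_simps)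
    also have "\<dots> = D s * (Pseq \<alpha> Cm Cs \<pi> \<phi> L D0 ph ph n s - Qseq \<alpha> Cm Cs \<pi> \<phi> L D0 ph ph n s - Cm)"
      unfolding u_def using D_eq[OF j0] R_eq[OF j0] by simp
    finally show ?thesis by simp
  qed
  have eqf: "(\<Sum>s<t. D s * (Pseq \<alpha> Cm Cs \<pi> \<phi> L D0 ph ph n s - Qseq \<alpha> Cm Cs \<pi> \<phi> L D0 ph ph n s - Cm)) / real t
      = (\<Sum>j\<in>{1..L}. (\<Sum>s<t. w1 j s * g1 j s) / real t + (\<Sum>s<t. w2 j s * g2 j s) / real t)" for t
    unfolding decomp by (simp add: sum.distrib sum_divide_distrib add_divide_distrib) (rule arg_cong2[where f="(+)"]; rule sum.swap)
  have lim: "(\<lambda>t. \<Sum>j\<in>{1..L}. (\<Sum>s<t. w1 j s * g1 j s) / real t + (\<Sum>s<t. w2 j s * g2 j s) / real t)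
      \<longlonglongrightarrow> (\<Sum>j\<in>{1..L}. \<sigma> j * (max 0 (sj j) * sj j / \<alpha>) + 0 * (sj j / \<alpha>))"
  proof (intro tendsto_sum tendsto_add)
    fix j assume j: "j \<in> {1..L}"
    show "(\<lambda>t. (\<Sum>s<t. w1 j s * g1 j s) / real t) \<longlonglongrightarrow> \<sigma> j * (max 0 (sj j) * sj j / \<alpha>)"
    proof (rule weighted_avg[where K=1])
      show "(\<lambda>t. (\<Sum>s<t. w1 j s) / real t) \<longlonglongrightarrow> \<sigma> j" using cnt[OF j] unfolding w1_def .
      show "\<bar>w1 j s\<bar> \<le> 1" for s unfolding w1_def by simp
      show "g1 j \<longlonglongrightarrow> max 0 (sj j) * sj j / \<alpha>"
        unfolding g1_def using alpha by (intro tendsto_intros ulim j) auto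
    qed
    show "(\<lambda>t. (\<Sum>s<t. w2 j s * g2 j s) / real t) \<longlonglongrightarrow> 0 * (sj j / \<alpha>)"
    proof (rule weighted_avg[where K=B])
      show "(\<lambda>t. (\<Sum>s<t. w2 j s) / real t) \<longlonglongrightarrow> 0" using nz[OF j] unfolding w2_def .
      show "\<bar>w2 j s\<bar> \<le> B" for s unfolding w2_def using nb[of s] Bnn by simp
      show "g2 j \<longlonglongrightarrow> sj j / \<alpha>"
        unfolding g2_def using alpha by (intro tendsto_intros ulim j) auto
    qed
  qed
  have val: "(\<Sum>j\<in>{1..L}. \<sigma> j * (max 0 (sj j) * sj j / \<alpha>) + 0 * (sj j / \<alpha>))
      = (1 / (16 * \<alpha>)) * (\<Sum>i=1..L. \<sigma> i * (\<phi> i - \<alpha> * (Cs + Cm))\<^sup>2)"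
  proof -
    have "(\<Sum>j\<in>{1..L}. \<sigma> j * (max 0 (sj j) * sj j / \<alpha>) + 0 * (sj j / \<alpha>))
        = (\<Sum>j\<in>{1..L}. (1 / (16 * \<alpha>)) * (\<sigma> j * (\<phi> j - \<alpha> * (Cs + Cm))\<^sup>2))"
    proof (rule sum.cong[OF refl])
      fix j assume j: "j \<in> {1..L}"
      have "max 0 (sj j) = sj j" using sj_pos[OF j] by simp
      then show "\<sigma> j * (max 0 (sj j) * sj j / \<alpha>) + 0 * (sj j / \<alpha>) = (1 / (16 * \<alpha>)) * (\<sigma> j * (\<phi> j - \<alpha> * (Cs + Cm))\<^sup>2)"
        unfolding sj_def using alpha by (simp add: field_simps power2_eq_square)
    qed
    then show ?thesis by (simp add: sum_distrib_left)
  qed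
  show ?thesis unfolding eqf using lim val by simp
qed

end




lemma (in prob_space) hoeff_step:
  fixes X :: "nat \<Rightarrow> 'a \<Rightarrow> real"
  assumes indep: "indep_vars (\<lambda>_. borel) X UNIV"
    and bnd: "\<And>t \<omega>. \<omega> \<in> space M \<Longrightarrow> \<bar>X t \<omega>\<bar> \<le> B"
    and mean: "\<And>t. expectation (X t) = \<mu>"
    and eps: "0 < \<epsilon>" and B: "0 < B"
  shows "prob {\<omega>\<in>space M. real (Suc n) * \<epsilon> \<le> \<bar>(\<Sum>s<Suc n. X s \<omega>) - real (Suc n) * \<mu>\<bar>}
         \<le> 2 * exp (- real (Suc n) * (\<epsilon>\<^sup>2 / (2 * B\<^sup>2)))"
proof -
  interpret H: Hoeffding_ineq M "{..<Suc n}" X "\<lambda>_. -B" "\<lambda>_. B" "real (Suc n) * \<mu>"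
  proof unfold_locales
    show "indep_vars (\<lambda>_. borel) X {..<Suc n}" by (rule indep_vars_subset[OF indep]) auto
    show "AE x in M. X i x \<in> {- B..B}" for i proof (intro AE_I2)
      fix x assume "x \<in> space M"
      then have "\<bar>X i x\<bar> \<le> B" by (rule bnd)
      then show "X i x \<in> {- B..B}" by (simp add: abs_le_iff)
    qed
  qed (auto simp: mean)
  have "prob {\<omega>\<in>space M. real (Suc n) * \<epsilon> \<le> \<bar>(\<Sum>s<Suc n. X s \<omega>) - real (Suc n) * \<mu>\<bar>}
      \<le> 2 * exp (- 2 * (real (Suc n) * \<epsilon>)\<^sup>2 / (\<Sum>i<Suc n. (B - - B)\<^sup>2))"
    using H.Hoeffding_ineq_abs_ge[of "real (Suc n) * \<epsilon>"] eps B by simp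
  also have "- 2 * (real (Suc n) * \<epsilon>)\<^sup>2 / (\<Sum>i<Suc n. (B - - B)\<^sup>2) = - real (Suc n) * (\<epsilon>\<^sup>2 / (2 * B\<^sup>2))"
  proof -
    define N where "N = real (Suc n)"
    have N: "0 < N" unfolding N_def by simp
    have "(\<Sum>i<Suc n. (B - - B)\<^sup>2) = N * (4 * B\<^sup>2)" unfolding N_def by (simp add: power2_eq_square)
    then show ?thesis unfolding N_def[symmetric] using N B by (simp add: field_simps power2_eq_square)
  qed
  finally show ?thesis .
qed

lemma (in prob_space) slln_bounded:
  fixes X :: "nat \<Rightarrow> 'a \<Rightarrow> real"
  assumes indep: "indep_vars (\<lambda>_. borel) X UNIV"
    and bnd0: "\<And>t \<omega>. \<omega> \<in> space M \<Longrightarrow> \<bar>X t \<omega>\<bar> \<le> B0"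
    and mean: "\<And>t. expectation (X t) = \<mu>"
  shows "AE \<omega> in M. (\<lambda>n. (\<Sum>s<n. X s \<omega>) / real n) \<longlonglongrightarrow> \<mu>"
proof -
  define B where "B = \<bar>B0\<bar> + 1"
  have B: "0 < B" unfolding B_def by simp
  have bnd: "\<And>t \<omega>. \<omega> \<in> space M \<Longrightarrow> \<bar>X t \<omega>\<bar> \<le> B" proof -
    fix t \<omega> assume "\<omega> \<in> space M"
    then have "\<bar>X t \<omega>\<bar> \<le> B0" by (rule bnd0)
    then show "\<bar>X t \<omega>\<bar> \<le> B" unfolding B_def by linarith
  qed
  have rv[measurable]: "X t \<in> borel_measurable M" for t
    using indep unfolding indep_vars_def by auto
  have ev: "AE \<omega> in M. eventually (\<lambda>n. \<bar>(\<Sum>s<Suc n. X s \<omega>) - real (Suc n) * \<mu>\<bar> < real (Suc n) * \<epsilon>) sequentially"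
    if eps: "0 < \<epsilon>" for \<epsilon>
  proof -
    define A where "A n = {\<omega>\<in>space M. real (Suc n) * \<epsilon> \<le> \<bar>(\<Sum>s<Suc n. X s \<omega>) - real (Suc n) * \<mu>\<bar>}" for n
    define \<kappa> where "\<kappa> = \<epsilon>\<^sup>2 / (2 * B\<^sup>2)"
    have kp: "0 < \<kappa>" unfolding \<kappa>_def using eps B by simp
    have Am[measurable]: "A n \<in> sets M" for n unfolding A_def by measurable
    have pA: "measure M (A n) \<le> 2 * exp (- \<kappa>) ^ Suc n" for n
    proof -
      have "measure M (A n) \<le> 2 * exp (- real (Suc n) * \<kappa>)"
        unfolding A_def \<kappa>_def by (rule hoeff_step[OF indep bnd mean eps B])
      also have "exp (- real (Suc n) * \<kappa>) = exp (- \<kappa>) ^ Suc n"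
        using exp_of_nat_mult[of "Suc n" "- \<kappa>"] by (simp add: algebra_simps)
      finally show ?thesis .
    qed
    have sg: "summable (\<lambda>n. 2 * exp (- \<kappa>) ^ Suc n)"
      using kp by (intro summable_mult summable_Suc_iff[THEN iffD2] summable_geometric) auto
    have "summable (\<lambda>n. measure M (A n))"
      by (rule summable_comparison_test[OF _ sg]) (use pA in auto)
    then have "AE x in M. eventually (\<lambda>n. x \<in> space M - A n) sequentially"
      by (intro borel_cantelli_AE1) (auto simp: less_top[symmetric])
    then show ?thesis
      by (rule eventually_mono) (auto simp: A_def elim!: eventually_mono)
  qed
  have "AE \<omega> in M. \<forall>k::nat. eventually (\<lambda>n. \<bar>(\<Sum>s<Suc n. X s \<omega>) - real (Suc n) * \<mu>\<bar> < real (Suc n) * (1 / real (Suc k))) sequentially"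
    by (intro AE_all_countable[THEN iffD2] allI ev) simp
  then show ?thesis
  proof (rule eventually_mono)
    fix \<omega> assume H: "\<forall>k::nat. eventually (\<lambda>n. \<bar>(\<Sum>s<Suc n. X s \<omega>) - real (Suc n) * \<mu>\<bar> < real (Suc n) * (1 / real (Suc k))) sequentially"
    have "(\<lambda>n. (\<Sum>s<Suc n. X s \<omega>) / real (Suc n)) \<longlonglongrightarrow> \<mu>"
    proof (rule LIMSEQ_I)
      fix r :: real assume r: "0 < r"
      obtain m :: nat where m: "m > 0" "inverse (real m) < r"
        using ex_inverse_of_nat_less[OF r] by blast
      define k where "k = m - 1"
      have k: "1 / real (Suc k) < r" using m unfolding k_def by (simp add: inverse_eq_divide)
      from H[rule_format, of k] obtain N where N: "\<And>n. n \<ge> N \<Longrightarrow> \<bar>(\<Sum>s<Suc n. X s \<omega>) - real (Suc n) * \<mu>\<bar> < real (Suc n) * (1 / real (Suc k))"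
        unfolding eventually_sequentially by auto
      show "\<exists>no. \<forall>n\<ge>no. norm ((\<Sum>s<Suc n. X s \<omega>) / real (Suc n) - \<mu>) < r"
      proof (intro exI allI impI)
        fix n assume "N \<le> n"
        then have h: "\<bar>(\<Sum>s<Suc n. X s \<omega>) - real (Suc n) * \<mu>\<bar> < real (Suc n) * (1 / real (Suc k))" by (rule N)
        have "(\<Sum>s<Suc n. X s \<omega>) / real (Suc n) - \<mu> = ((\<Sum>s<Suc n. X s \<omega>) - real (Suc n) * \<mu>) / real (Suc n)"
          by (simp add: field_simps)
        then have "norm ((\<Sum>s<Suc n. X s \<omega>) / real (Suc n) - \<mu>) = \<bar>(\<Sum>s<Suc n. X s \<omega>) - real (Suc n) * \<mu>\<bar> / real (Suc n)"
          by (simp add: abs_divide)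
        also have "\<dots> < 1 / real (Suc k)"
          using h by (simp add: field_simps del: of_nat_Suc)
        finally show "norm ((\<Sum>s<Suc n. X s \<omega>) / real (Suc n) - \<mu>) < r" using k by linarith
      qed
    qed
    then show "(\<lambda>n. (\<Sum>s<n. X s \<omega>) / real n) \<longlonglongrightarrow> \<mu>"
      by (rule LIMSEQ_imp_Suc)
  qed
qed




lemma (in prob_space) in_vimage_PiM:
  fixes X :: "'i \<Rightarrow> 'a \<Rightarrow> 'b::topological_space"
  assumes A: "A \<in> sets borel"
  shows "X t -` A \<inter> space M \<in> sets (vimage_algebra (space M) (\<lambda>\<omega> t. X t \<omega>) (Pi\<^sub>M UNIV (\<lambda>_. borel)))"
proof -
  have "(\<lambda>\<omega> t. X t \<omega>) \<in> space M \<rightarrow> space (Pi\<^sub>M UNIV (\<lambda>_. (borel :: 'b measure)))"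
    by (auto simp: space_PiM)
  then have eq: "sets (vimage_algebra (space M) (\<lambda>\<omega> t. X t \<omega>) (Pi\<^sub>M UNIV (\<lambda>_. (borel :: 'b measure))))
     = {(\<lambda>\<omega> t. X t \<omega>) -` B \<inter> space M | B. B \<in> sets (Pi\<^sub>M UNIV (\<lambda>_. (borel :: 'b measure)))}"
    by (rule sets_vimage_algebra2)
  have "(\<lambda>f. f t) -` A \<inter> space (Pi\<^sub>M UNIV (\<lambda>_. (borel :: 'b measure))) \<in> sets (Pi\<^sub>M UNIV (\<lambda>_. (borel :: 'b measure)))"
    using measurable_component_singleton[of t UNIV "\<lambda>_. (borel :: 'b measure)"] A
    by (auto intro: measurable_sets)
  moreover have "X t -` A \<inter> space M = (\<lambda>\<omega> t. X t \<omega>) -` ((\<lambda>f. f t) -` A \<inter> space (Pi\<^sub>M UNIV (\<lambda>_. (borel :: 'b measure)))) \<inter> space M"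
    by (auto simp: space_PiM)
  ultimately show ?thesis unfolding eq by blast
qed

lemma (in prob_space) indep_vars_pair_family:
  fixes X :: "'i \<Rightarrow> 'a \<Rightarrow> 'b::second_countable_topology"
    and Y :: "'i \<Rightarrow> 'a \<Rightarrow> 'c::second_countable_topology"
  assumes X: "indep_vars (\<lambda>_. borel) X UNIV" and Y: "indep_vars (\<lambda>_. borel) Y UNIV"
    and XY: "indep_set (sets (vimage_algebra (space M) (\<lambda>\<omega> t. X t \<omega>) (Pi\<^sub>M UNIV (\<lambda>_. borel))))
                       (sets (vimage_algebra (space M) (\<lambda>\<omega> t. Y t \<omega>) (Pi\<^sub>M UNIV (\<lambda>_. borel))))"
  shows "indep_vars (\<lambda>_. borel) (\<lambda>t \<omega>. (X t \<omega>, Y t \<omega>)) UNIV"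
proof -
  define VX where "VX = vimage_algebra (space M) (\<lambda>\<omega> t. X t \<omega>) (Pi\<^sub>M UNIV (\<lambda>_. (borel :: 'b measure)))"
  define VY where "VY = vimage_algebra (space M) (\<lambda>\<omega> t. Y t \<omega>) (Pi\<^sub>M UNIV (\<lambda>_. (borel :: 'c measure)))"
  have XY': "sets VX \<subseteq> events" "sets VY \<subseteq> events"
    and XYp: "\<And>a b. a \<in> sets VX \<Longrightarrow> b \<in> sets VY \<Longrightarrow> prob (a \<inter> b) = prob a * prob b"
    using XY unfolding indep_sets2_eq VX_def VY_def by auto
  have Xrv[measurable]: "X t \<in> borel_measurable M" for t using X unfolding indep_vars_def by auto
  have Yrv[measurable]: "Y t \<in> borel_measurable M" for t using Y unfolding indep_vars_def by auto
  define G where "G t = {a \<inter> b | a b. (\<exists>A. A \<in> sets borel \<and> a = X t -` A \<inter> space M) \<and> (\<exists>B. B \<in> sets borel \<and> b = Y t -` B \<inter> space M)}" for t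
  have Gmem: "(X t -` A \<inter> space M) \<inter> (Y t -` B \<inter> space M) \<in> G t" if "A \<in> sets borel" "B \<in> sets borel" for t A B
    unfolding G_def using that by (intro CollectI exI[of _ "X t -` A \<inter> space M"] exI[of _ "Y t -` B \<inter> space M"]) auto
  have GX: "X t -` A \<inter> space M \<in> sets VX" if "A \<in> sets borel" for t A
    unfolding VX_def by (rule in_vimage_PiM[OF that])
  have GY: "Y t -` A \<inter> space M \<in> sets VY" if "A \<in> sets borel" for t A
    unfolding VY_def by (rule in_vimage_PiM[OF that])
  have indG: "indep_sets G UNIV"
  proof (rule indep_setsI)
    fix i show "G i \<subseteq> events" unfolding G_def by auto
  next
    fix A J assume J: "J \<noteq> {}" "J \<subseteq> (UNIV :: 'i set)" "finite J" and AJ: "\<forall>j\<in>J. A j \<in> G j"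
    then have "\<forall>j\<in>J. \<exists>ab. fst ab \<in> sets borel \<and> snd ab \<in> sets borel \<and>
                  A j = (X j -` fst ab \<inter> space M) \<inter> (Y j -` snd ab \<inter> space M)"
      unfolding G_def by fastforce
    then obtain ab where ab: "\<And>j. j \<in> J \<Longrightarrow> fst (ab j) \<in> sets borel \<and> snd (ab j) \<in> sets borel \<and>
                  A j = (X j -` fst (ab j) \<inter> space M) \<inter> (Y j -` snd (ab j) \<inter> space M)"
      by metis
    define a where "a j = X j -` fst (ab j) \<inter> space M" for j
    define b where "b j = Y j -` snd (ab j) \<inter> space M" for j
    have aX: "a j \<in> sets VX" if "j \<in> J" for j unfolding a_def using ab[OF that] GX by blast
    have bY: "b j \<in> sets VY" if "j \<in> J" for j unfolding b_def using ab[OF that] GY by blast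
    have Aj: "A j = a j \<inter> b j" if "j \<in> J" for j using ab[OF that] unfolding a_def b_def by blast
    have "(\<Inter>j\<in>J. A j) = (\<Inter>j\<in>J. a j) \<inter> (\<Inter>j\<in>J. b j)" using Aj J by auto
    moreover have "(\<Inter>j\<in>J. a j) \<in> sets VX" using J aX by (intro sets.finite_INT) auto
    moreover have "(\<Inter>j\<in>J. b j) \<in> sets VY" using J bY by (intro sets.finite_INT) auto
    ultimately have "prob (\<Inter>j\<in>J. A j) = prob (\<Inter>j\<in>J. a j) * prob (\<Inter>j\<in>J. b j)"
      using XYp by simp
    also have "prob (\<Inter>j\<in>J. a j) = (\<Prod>j\<in>J. prob (a j))"
      unfolding a_def using J ab by (intro indep_varsD[OF X]) auto
    also have "prob (\<Inter>j\<in>J. b j) = (\<Prod>j\<in>J. prob (b j))"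
      unfolding b_def using J ab by (intro indep_varsD[OF Y]) auto
    also have "(\<Prod>j\<in>J. prob (a j)) * (\<Prod>j\<in>J. prob (b j)) = (\<Prod>j\<in>J. prob (A j))"
      using Aj aX bY XYp by (simp add: prod.distrib[symmetric])
    finally show "prob (\<Inter>j\<in>J. A j) = (\<Prod>j\<in>J. prob (A j))" .
  qed
  have stG: "Int_stable (G t)" for t
  proof (rule Int_stableI)
    fix u v assume "u \<in> G t" "v \<in> G t"
    then obtain A1 B1 A2 B2 where h: "A1 \<in> sets borel" "B1 \<in> sets borel" "A2 \<in> sets borel" "B2 \<in> sets borel"
      "u = (X t -` A1 \<inter> space M) \<inter> (Y t -` B1 \<inter> space M)" "v = (X t -` A2 \<inter> space M) \<inter> (Y t -` B2 \<inter> space M)"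
      unfolding G_def by blast
    then have "u \<inter> v = (X t -` (A1 \<inter> A2) \<inter> space M) \<inter> (Y t -` (B1 \<inter> B2) \<inter> space M)" by auto
    moreover have "A1 \<inter> A2 \<in> sets borel" "B1 \<inter> B2 \<in> sets borel" using h by auto
    ultimately show "u \<inter> v \<in> G t" using Gmem[of "A1 \<inter> A2" "B1 \<inter> B2" t] by (simp only:)
  qed
  have indS: "indep_sets (\<lambda>t. sigma_sets (space M) (G t)) UNIV"
    by (rule indep_sets_sigma[OF indG stG])
  have Gsub: "G t \<subseteq> Pow (space M)" for t unfolding G_def by auto
  have meas: "(\<lambda>\<omega>. (X t \<omega>, Y t \<omega>)) \<in> measurable (sigma (space M) (G t)) borel" for t
  proof -
    have mX: "X t \<in> measurable (sigma (space M) (G t)) borel"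
    proof (rule measurableI)
      fix A :: "'b set" assume A: "A \<in> sets borel"
      have "X t -` A \<inter> space (sigma (space M) (G t)) = (X t -` A \<inter> space M) \<inter> (Y t -` UNIV \<inter> space M)"
        using Gsub by auto
      also have "\<dots> \<in> G t" using A by (intro Gmem) auto
      finally show "X t -` A \<inter> space (sigma (space M) (G t)) \<in> sets (sigma (space M) (G t))"
        using Gsub by (auto simp: sets_measure_of)
    qed simp
    have mY: "Y t \<in> measurable (sigma (space M) (G t)) borel"
    proof (rule measurableI)
      fix A :: "'c set" assume A: "A \<in> sets borel"
      have "Y t -` A \<inter> space (sigma (space M) (G t)) = (X t -` UNIV \<inter> space M) \<inter> (Y t -` A \<inter> space M)"
        using Gsub by auto
      also have "\<dots> \<in> G t" using A by (intro Gmem) auto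
      finally show "Y t -` A \<inter> space (sigma (space M) (G t)) \<in> sets (sigma (space M) (G t))"
        using Gsub by (auto simp: sets_measure_of)
    qed simp
    have "(\<lambda>\<omega>. (X t \<omega>, Y t \<omega>)) \<in> measurable (sigma (space M) (G t)) (borel \<Otimes>\<^sub>M borel)"
      by (rule measurable_Pair[OF mX mY])
    then show ?thesis by (simp add: borel_prod)
  qed
  show ?thesis unfolding indep_vars_def2
  proof (intro conjI ballI)
    fix t :: 'i
    have "(\<lambda>\<omega>. (X t \<omega>, Y t \<omega>)) \<in> measurable M (borel \<Otimes>\<^sub>M borel)"
      by (rule measurable_Pair) (auto)
    then show "random_variable borel (\<lambda>\<omega>. (X t \<omega>, Y t \<omega>))" by (simp add: borel_prod)
  next
    show "indep_sets (\<lambda>t. {(\<lambda>\<omega>. (X t \<omega>, Y t \<omega>)) -` A \<inter> space M |A. A \<in> sets borel}) UNIV"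
    proof (rule indep_sets_mono_sets[OF indS])
      fix t :: 'i
      show "{(\<lambda>\<omega>. (X t \<omega>, Y t \<omega>)) -` A \<inter> space M |A. A \<in> sets borel} \<subseteq> sigma_sets (space M) (G t)"
      proof safe
        fix A :: "('b \<times> 'c) set" assume "A \<in> sets borel"
        from measurable_sets[OF meas this]
        show "(\<lambda>\<omega>. (X t \<omega>, Y t \<omega>)) -` A \<inter> space M \<in> sigma_sets (space M) (G t)"
          using Gsub by (simp add: sets_measure_of)
      qed
    qed
  qed
qed




lemma (in prob_space) indep_set_mono:
  assumes "indep_set A B" "A' \<subseteq> A" "B' \<subseteq> B"
  shows "indep_set A' B'"
  using assms unfolding indep_sets2_eq by blast

theorem theorem2:
  fixes M :: "'a measure" and \<alpha> Cm Cs \<pi> :: real and L :: nat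
    and \<phi> \<sigma> D0 :: "nat \<Rightarrow> real" and Phi Phihat N :: "nat \<Rightarrow> 'a \<Rightarrow> real"
  assumes M: "prob_space M"
    and alpha: "0 < \<alpha>" "\<alpha> \<le> 1" and costs: "0 \<le> Cm" "0 \<le> Cs"
    and phi_mono: "strict_mono_on {1..L} \<phi>"
    and sigma_pos: "\<forall>i\<in>{1..L}. 0 < \<sigma> i" and sigma_sum: "(\<Sum>i=1..L. \<sigma> i) = 1"
    and phi1: "\<phi> 1 > \<alpha> * (Cs + Cm)"
    and pi: "0 \<le> \<pi>"
    and pair_dist: "\<forall>t. \<forall>i\<in>{1..L}. \<forall>j\<in>{1..L}.
          measure M {\<omega> \<in> space M. Phi t \<omega> = \<phi> i \<and> Phihat t \<omega> = \<phi> j} = \<sigma> i * r_id i j"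
    and pair_indep: "prob_space.indep_vars M (\<lambda>_. borel) (\<lambda>t \<omega>. (Phi t \<omega>, Phihat t \<omega>)) UNIV"
    and noise_indep: "prob_space.indep_vars M (\<lambda>_. borel) N UNIV"
    and noise_ident: "\<forall>t. distr M borel (N t) = distr M borel (N 0)"
    and noise_bdd: "\<exists>B. \<forall>t. \<forall>\<omega>\<in>space M. \<bar>N t \<omega>\<bar> \<le> B"
    and noise_mean: "\<forall>t. integral\<^sup>L M (N t) = 0"
    and pair_noise_indep: "prob_space.indep_set M
          (sets (vimage_algebra (space M) (\<lambda>\<omega> t. (Phi t \<omega>, Phihat t \<omega>)) (Pi\<^sub>M UNIV (\<lambda>_. borel))))
          (sets (vimage_algebra (space M) (\<lambda>\<omega> t. N t \<omega>) (Pi\<^sub>M UNIV (\<lambda>_. borel))))"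
  shows "(\<forall>j\<in>{1..L}.
            sqrt \<alpha> * hc \<alpha> Cm Cs (\<phi> j) (\<phi> j) = (\<phi> j - \<alpha> * (Cs + Cm)) / 4
          \<and> (AE \<omega> in M.
              (\<lambda>t. Dbar \<phi> D0 (\<lambda>s. Phihat s \<omega>)
                     (Dseq \<alpha> Cm Cs \<pi> \<phi> L D0 (\<lambda>s. Phi s \<omega>) (\<lambda>s. Phihat s \<omega>) (\<lambda>s. N s \<omega>)) j t)
              \<longlonglongrightarrow> sqrt \<alpha> * hc \<alpha> Cm Cs (\<phi> j) (\<phi> j)))
       \<and> (AE \<omega> in M.
            (\<lambda>t. (\<Sum>s<t. Dseq \<alpha> Cm Cs \<pi> \<phi> L D0 (\<lambda>s. Phi s \<omega>) (\<lambda>s. Phihat s \<omega>) (\<lambda>s. N s \<omega>) s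
                   * (Pseq \<alpha> Cm Cs \<pi> \<phi> L D0 (\<lambda>s. Phi s \<omega>) (\<lambda>s. Phihat s \<omega>) (\<lambda>s. N s \<omega>) s
                      - Qseq \<alpha> Cm Cs \<pi> \<phi> L D0 (\<lambda>s. Phi s \<omega>) (\<lambda>s. Phihat s \<omega>) (\<lambda>s. N s \<omega>) s
                      - Cm)) / real t)
            \<longlonglongrightarrow> (1 / (16 * \<alpha>)) * (\<Sum>i=1..L. \<sigma> i * (\<phi> i - \<alpha> * (Cs + Cm))\<^sup>2))"
proof -
  interpret prob_space M by (rule M)
  have Prv[measurable]: "(\<lambda>\<omega>. (Phi t \<omega>, Phihat t \<omega>)) \<in> borel_measurable M" for t
    using pair_indep unfolding indep_vars_def by auto
  have Phirv[measurable]: "Phi t \<in> borel_measurable M" for t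
  proof -
    have "(\<lambda>\<omega>. (Phi t \<omega>, Phihat t \<omega>)) \<in> measurable M (borel \<Otimes>\<^sub>M borel)"
      using Prv[of t] by (simp add: borel_prod)
    then have "(\<lambda>\<omega>. fst (Phi t \<omega>, Phihat t \<omega>)) \<in> borel_measurable M"
      by (rule measurable_compose[OF _ measurable_fst])
    then show ?thesis by simp
  qed
  have Phihrv[measurable]: "Phihat t \<in> borel_measurable M" for t
  proof -
    have "(\<lambda>\<omega>. (Phi t \<omega>, Phihat t \<omega>)) \<in> measurable M (borel \<Otimes>\<^sub>M borel)"
      using Prv[of t] by (simp add: borel_prod)
    then have "(\<lambda>\<omega>. snd (Phi t \<omega>, Phihat t \<omega>)) \<in> borel_measurable M"
      by (rule measurable_compose[OF _ measurable_snd])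
    then show ?thesis by simp
  qed
  have Nrv[measurable]: "N t \<in> borel_measurable M" for t
    using noise_indep unfolding indep_vars_def by auto
  obtain B where B: "\<And>t \<omega>. \<omega> \<in> space M \<Longrightarrow> \<bar>N t \<omega>\<bar> \<le> B" using noise_bdd by blast
  have L1: "1 \<le> L"
  proof (rule ccontr)
    assume "\<not> 1 \<le> L" then have "L = 0" by simp
    then show False using sigma_sum by simp
  qed
  have inj: "inj_on \<phi> {1..L}" using phi_mono by (rule strict_mono_on_imp_inj_on)
  have P1t: "AE \<omega> in M. Phihat t \<omega> = Phi t \<omega> \<and> (\<exists>j\<in>{1..L}. Phi t \<omega> = \<phi> j)" for t
  proof -
    define E where "E i = {\<omega>\<in>space M. Phi t \<omega> = \<phi> i \<and> Phihat t \<omega> = \<phi> i}" for i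
    have Em: "E i \<in> sets M" for i unfolding E_def by measurable
    have disj: "disjoint_family_on E {1..L}"
    proof (unfold disjoint_family_on_def, intro ballI impI)
      fix m n assume mn: "m \<in> {1..L}" "n \<in> {1..L}" "m \<noteq> n"
      then have "\<phi> m \<noteq> \<phi> n" using inj by (auto dest: inj_onD)
      then show "E m \<inter> E n = {}" unfolding E_def by auto
    qed
    have "prob (\<Union>i\<in>{1..L}. E i) = (\<Sum>i\<in>{1..L}. prob (E i))"
      by (rule finite_measure_finite_Union) (use Em disj in auto)
    also have "\<dots> = (\<Sum>i\<in>{1..L}. \<sigma> i)"
      using pair_dist unfolding E_def r_id_def by (intro sum.cong) auto
    finally have "prob (\<Union>i\<in>{1..L}. E i) = 1" using sigma_sum by simp
    then have "AE \<omega> in M. \<omega> \<in> (\<Union>i\<in>{1..L}. E i)" by (rule AE_prob_1)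
    then show ?thesis by (rule eventually_mono) (auto simp: E_def)
  qed
  have P1: "AE \<omega> in M. \<forall>t. Phihat t \<omega> = Phi t \<omega> \<and> (\<exists>j\<in>{1..L}. Phi t \<omega> = \<phi> j)"
    using P1t by (simp add: AE_all_countable)
  have probj: "prob {\<omega>\<in>space M. Phi t \<omega> = \<phi> j} = \<sigma> j" if j: "j \<in> {1..L}" for t j
  proof -
    have "prob {\<omega>\<in>space M. Phi t \<omega> = \<phi> j} = prob {\<omega>\<in>space M. Phi t \<omega> = \<phi> j \<and> Phihat t \<omega> = \<phi> j}"
      by (rule finite_measure_eq_AE) (use P1t[of t] in \<open>auto elim!: eventually_mono\<close>)
    also have "\<dots> = \<sigma> j" using pair_dist j unfolding r_id_def by simp
    finally show ?thesis .
  qed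
  have P2: "AE \<omega> in M. (\<lambda>n. (\<Sum>s<n. if Phi s \<omega> = \<phi> j then 1 else 0) / real n) \<longlonglongrightarrow> \<sigma> j"
    if j: "j \<in> {1..L}" for j
  proof (rule slln_bounded)
    have "indep_vars (\<lambda>_. borel) (\<lambda>t \<omega>. (\<lambda>p. if fst p = \<phi> j then 1 else 0 :: real) (Phi t \<omega>, Phihat t \<omega>)) UNIV"
    proof (rule indep_vars_compose2[OF pair_indep])
      show "(\<lambda>p::real\<times>real. if fst p = \<phi> j then 1 else 0 :: real) \<in> borel_measurable borel"
        unfolding borel_prod[symmetric] by measurable
    qed
    then show "indep_vars (\<lambda>_. borel) (\<lambda>t \<omega>. if Phi t \<omega> = \<phi> j then 1 else 0 :: real) UNIV" by simp
    show "\<bar>if Phi t \<omega> = \<phi> j then 1 else 0 :: real\<bar> \<le> 1" for t \<omega> by simp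
    show "expectation (\<lambda>\<omega>. if Phi t \<omega> = \<phi> j then 1 else 0) = \<sigma> j" for t
    proof -
      have "expectation (\<lambda>\<omega>. if Phi t \<omega> = \<phi> j then 1 else 0) = expectation (indicator {\<omega>\<in>space M. Phi t \<omega> = \<phi> j})"
        by (rule Bochner_Integration.integral_cong) (auto simp: indicator_def)
      also have "\<dots> = prob {\<omega>\<in>space M. Phi t \<omega> = \<phi> j}" by (simp add: Int_absorb2)
      finally show ?thesis using probj[OF j] by simp
    qed
  qed
  have jointI: "indep_vars (\<lambda>_. borel) (\<lambda>t \<omega>. ((Phi t \<omega>, Phihat t \<omega>), N t \<omega>)) UNIV"
    by (rule indep_vars_pair_family[OF pair_indep noise_indep pair_noise_indep])
  have P3: "AE \<omega> in M. (\<lambda>n. (\<Sum>s<n. if Phi s \<omega> = \<phi> j then N s \<omega> else 0) / real n) \<longlonglongrightarrow> 0"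
    if j: "j \<in> {1..L}" for j
  proof (rule slln_bounded)
    have "indep_vars (\<lambda>_. borel) (\<lambda>t \<omega>. (\<lambda>q. if fst (fst q) = \<phi> j then snd q else 0 :: real) ((Phi t \<omega>, Phihat t \<omega>), N t \<omega>)) UNIV"
    proof (rule indep_vars_compose2[OF jointI])
      show "(\<lambda>q::(real\<times>real)\<times>real. if fst (fst q) = \<phi> j then snd q else 0 :: real) \<in> borel_measurable borel"
        unfolding borel_prod[symmetric] by measurable
    qed
    then show "indep_vars (\<lambda>_. borel) (\<lambda>t \<omega>. if Phi t \<omega> = \<phi> j then N t \<omega> else 0) UNIV" by (simp only: snd_conv fst_conv)
    show "\<bar>if Phi t \<omega> = \<phi> j then N t \<omega> else 0\<bar> \<le> \<bar>B\<bar>" if "\<omega> \<in> space M" for t \<omega>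
      using B[OF that, of t] by auto
    show "expectation (\<lambda>\<omega>. if Phi t \<omega> = \<phi> j then N t \<omega> else 0) = 0" for t
    proof -
      define g where "g \<omega> = (if Phi t \<omega> = \<phi> j then 1 else 0 :: real)" for \<omega>
      have hm: "(\<lambda>p::real\<times>real. if fst p = \<phi> j then 1 else 0 :: real) \<in> borel_measurable borel"
        unfolding borel_prod[symmetric] by measurable
      have grv: "g \<in> borel_measurable M" unfolding g_def by measurable
      have ig: "indep_var borel g borel (N t)"
        unfolding indep_var_eq
      proof (intro conjI grv Nrv)
        show "indep_set (sigma_sets (space M) {g -` A \<inter> space M |A. A \<in> sets borel})
                        (sigma_sets (space M) {N t -` A \<inter> space M |A. A \<in> sets borel})"
        proof (rule indep_set_mono[OF pair_noise_indep])
          have "{g -` A \<inter> space M |A. A \<in> sets borel}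
              \<subseteq> sets (vimage_algebra (space M) (\<lambda>\<omega> t. (Phi t \<omega>, Phihat t \<omega>)) (Pi\<^sub>M UNIV (\<lambda>_. borel)))"
          proof safe
            fix A :: "real set" assume A: "A \<in> sets borel"
            have C: "(\<lambda>p::real\<times>real. if fst p = \<phi> j then 1 else 0 :: real) -` A \<inter> space borel \<in> sets borel"
              using measurable_sets[OF hm A] .
            have "g -` A \<inter> space M = (\<lambda>\<omega>. (Phi t \<omega>, Phihat t \<omega>)) -` ((\<lambda>p::real\<times>real. if fst p = \<phi> j then 1 else 0 :: real) -` A \<inter> space borel) \<inter> space M"
              unfolding g_def by auto
            also have "\<dots> \<in> sets (vimage_algebra (space M) (\<lambda>\<omega> t. (Phi t \<omega>, Phihat t \<omega>)) (Pi\<^sub>M UNIV (\<lambda>_. borel)))"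
              using in_vimage_PiM[OF C, of "\<lambda>t \<omega>. (Phi t \<omega>, Phihat t \<omega>)" t] by simp
            finally show "g -` A \<inter> space M \<in> sets (vimage_algebra (space M) (\<lambda>\<omega> t. (Phi t \<omega>, Phihat t \<omega>)) (Pi\<^sub>M UNIV (\<lambda>_. borel)))" .
          qed
          then show "sigma_sets (space M) {g -` A \<inter> space M |A. A \<in> sets borel}
              \<subseteq> sets (vimage_algebra (space M) (\<lambda>\<omega> t. (Phi t \<omega>, Phihat t \<omega>)) (Pi\<^sub>M UNIV (\<lambda>_. borel)))"
            using sets.sigma_sets_subset[of "{g -` A \<inter> space M |A. A \<in> sets borel}"
              "vimage_algebra (space M) (\<lambda>\<omega> t. (Phi t \<omega>, Phihat t \<omega>)) (Pi\<^sub>M UNIV (\<lambda>_. borel))"]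
            by simp
          show "sigma_sets (space M) {N t -` A \<inter> space M |A. A \<in> sets borel}
              \<subseteq> sets (vimage_algebra (space M) (\<lambda>\<omega> t. N t \<omega>) (Pi\<^sub>M UNIV (\<lambda>_. borel)))"
            using sets.sigma_sets_subset[of "{N t -` A \<inter> space M |A. A \<in> sets borel}"
                "vimage_algebra (space M) (\<lambda>\<omega> t. N t \<omega>) (Pi\<^sub>M UNIV (\<lambda>_. borel))"]
              in_vimage_PiM[of _ N t]
            by auto
        qed
      qed
      have intg: "integrable M g"
        by (rule integrable_const_bound[where B=1]) (auto simp: g_def grv)
      have intN: "integrable M (N t)"
        by (rule integrable_const_bound[where B=B]) (auto intro: B)
      have "expectation (\<lambda>\<omega>. if Phi t \<omega> = \<phi> j then N t \<omega> else 0) = expectation (\<lambda>\<omega>. g \<omega> * N t \<omega>)"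
        unfolding g_def by (rule Bochner_Integration.integral_cong) auto
      also have "\<dots> = expectation g * expectation (N t)"
        by (rule indep_var_lebesgue_integral[OF ig intg intN])
      finally show ?thesis using noise_mean by simp
    qed
  qed
  have AEall: "AE \<omega> in M. \<omega> \<in> space M \<and> (\<forall>t. Phihat t \<omega> = Phi t \<omega> \<and> (\<exists>j\<in>{1..L}. Phi t \<omega> = \<phi> j))
      \<and> (\<forall>j\<in>{1..L}. (\<lambda>n. (\<Sum>s<n. if Phi s \<omega> = \<phi> j then 1 else 0) / real n) \<longlonglongrightarrow> \<sigma> j)
      \<and> (\<forall>j\<in>{1..L}. (\<lambda>n. (\<Sum>s<n. if Phi s \<omega> = \<phi> j then N s \<omega> else 0) / real n) \<longlonglongrightarrow> 0)"
  proof -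
    have P2a: "AE \<omega> in M. \<forall>j\<in>{1..L}. (\<lambda>n. (\<Sum>s<n. if Phi s \<omega> = \<phi> j then 1 else 0) / real n) \<longlonglongrightarrow> \<sigma> j"
      by (rule AE_finite_allI[OF finite_atLeastAtMost]) (rule P2)
    have P3a: "AE \<omega> in M. \<forall>j\<in>{1..L}. (\<lambda>n. (\<Sum>s<n. if Phi s \<omega> = \<phi> j then N s \<omega> else 0) / real n) \<longlonglongrightarrow> 0"
      by (rule AE_finite_allI[OF finite_atLeastAtMost]) (rule P3)
    show ?thesis using AE_space P1 P2a P3a by eventually_elim auto
  qed
  have DET: "det \<alpha> Cm Cs \<pi> \<phi> L (\<lambda>s. Phi s \<omega>) (\<lambda>s. N s \<omega>) \<sigma> B"
    if h: "\<omega> \<in> space M \<and> (\<forall>t. Phihat t \<omega> = Phi t \<omega> \<and> (\<exists>j\<in>{1..L}. Phi t \<omega> = \<phi> j))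
      \<and> (\<forall>j\<in>{1..L}. (\<lambda>n. (\<Sum>s<n. if Phi s \<omega> = \<phi> j then 1 else 0) / real n) \<longlonglongrightarrow> \<sigma> j)
      \<and> (\<forall>j\<in>{1..L}. (\<lambda>n. (\<Sum>s<n. if Phi s \<omega> = \<phi> j then N s \<omega> else 0) / real n) \<longlonglongrightarrow> 0)" for \<omega>
    using h alpha costs phi_mono phi1 pi sigma_pos B by unfold_locales auto
  have phh: "(\<lambda>s. Phihat s \<omega>) = (\<lambda>s. Phi s \<omega>)"
    if "\<forall>t. Phihat t \<omega> = Phi t \<omega> \<and> (\<exists>j\<in>{1..L}. Phi t \<omega> = \<phi> j)" for \<omega>
    using that by auto
  show ?thesis
  proof (intro conjI ballI)
    fix j assume j: "j \<in> {1..L}"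
    show "sqrt \<alpha> * hc \<alpha> Cm Cs (\<phi> j) (\<phi> j) = (\<phi> j - \<alpha> * (Cs + Cm)) / 4"
      using hc_eq[OF alpha(1)] .
    show "AE \<omega> in M. (\<lambda>t. Dbar \<phi> D0 (\<lambda>s. Phihat s \<omega>)
                     (Dseq \<alpha> Cm Cs \<pi> \<phi> L D0 (\<lambda>s. Phi s \<omega>) (\<lambda>s. Phihat s \<omega>) (\<lambda>s. N s \<omega>)) j t)
              \<longlonglongrightarrow> sqrt \<alpha> * hc \<alpha> Cm Cs (\<phi> j) (\<phi> j)"
      using AEall
    proof (rule eventually_mono)
      fix \<omega> assume h: "\<omega> \<in> space M \<and> (\<forall>t. Phihat t \<omega> = Phi t \<omega> \<and> (\<exists>j\<in>{1..L}. Phi t \<omega> = \<phi> j))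
      \<and> (\<forall>j\<in>{1..L}. (\<lambda>n. (\<Sum>s<n. if Phi s \<omega> = \<phi> j then 1 else 0) / real n) \<longlonglongrightarrow> \<sigma> j)
      \<and> (\<forall>j\<in>{1..L}. (\<lambda>n. (\<Sum>s<n. if Phi s \<omega> = \<phi> j then N s \<omega> else 0) / real n) \<longlonglongrightarrow> 0)"
      interpret d: det \<alpha> Cm Cs \<pi> \<phi> L D0 "\<lambda>s. Phi s \<omega>" "\<lambda>s. N s \<omega>" \<sigma> B by (rule DET[OF h])
      show "(\<lambda>t. Dbar \<phi> D0 (\<lambda>s. Phihat s \<omega>)
                     (Dseq \<alpha> Cm Cs \<pi> \<phi> L D0 (\<lambda>s. Phi s \<omega>) (\<lambda>s. Phihat s \<omega>) (\<lambda>s. N s \<omega>)) j t)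
              \<longlonglongrightarrow> sqrt \<alpha> * hc \<alpha> Cm Cs (\<phi> j) (\<phi> j)"
        unfolding phh[OF conjunct1[OF conjunct2[OF h]]] hc_eq[OF alpha(1)]
        using d.Dbar_lim[OF j] unfolding d.sj_def .
    qed
  next
    show "AE \<omega> in M.
            (\<lambda>t. (\<Sum>s<t. Dseq \<alpha> Cm Cs \<pi> \<phi> L D0 (\<lambda>s. Phi s \<omega>) (\<lambda>s. Phihat s \<omega>) (\<lambda>s. N s \<omega>) s
                   * (Pseq \<alpha> Cm Cs \<pi> \<phi> L D0 (\<lambda>s. Phi s \<omega>) (\<lambda>s. Phihat s \<omega>) (\<lambda>s. N s \<omega>) s
                      - Qseq \<alpha> Cm Cs \<pi> \<phi> L D0 (\<lambda>s. Phi s \<omega>) (\<lambda>s. Phihat s \<omega>) (\<lambda>s. N s \<omega>) s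
                      - Cm)) / real t)
            \<longlonglongrightarrow> (1 / (16 * \<alpha>)) * (\<Sum>i=1..L. \<sigma> i * (\<phi> i - \<alpha> * (Cs + Cm))\<^sup>2)"
      using AEall
    proof (rule eventually_mono)
      fix \<omega> assume h: "\<omega> \<in> space M \<and> (\<forall>t. Phihat t \<omega> = Phi t \<omega> \<and> (\<exists>j\<in>{1..L}. Phi t \<omega> = \<phi> j))
      \<and> (\<forall>j\<in>{1..L}. (\<lambda>n. (\<Sum>s<n. if Phi s \<omega> = \<phi> j then 1 else 0) / real n) \<longlonglongrightarrow> \<sigma> j)
      \<and> (\<forall>j\<in>{1..L}. (\<lambda>n. (\<Sum>s<n. if Phi s \<omega> = \<phi> j then N s \<omega> else 0) / real n) \<longlonglongrightarrow> 0)"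
      interpret d: det \<alpha> Cm Cs \<pi> \<phi> L D0 "\<lambda>s. Phi s \<omega>" "\<lambda>s. N s \<omega>" \<sigma> B by (rule DET[OF h])
      show "(\<lambda>t. (\<Sum>s<t. Dseq \<alpha> Cm Cs \<pi> \<phi> L D0 (\<lambda>s. Phi s \<omega>) (\<lambda>s. Phihat s \<omega>) (\<lambda>s. N s \<omega>) s
                   * (Pseq \<alpha> Cm Cs \<pi> \<phi> L D0 (\<lambda>s. Phi s \<omega>) (\<lambda>s. Phihat s \<omega>) (\<lambda>s. N s \<omega>) s
                      - Qseq \<alpha> Cm Cs \<pi> \<phi> L D0 (\<lambda>s. Phi s \<omega>) (\<lambda>s. Phihat s \<omega>) (\<lambda>s. N s \<omega>) s
                      - Cm)) / real t)
            \<longlonglongrightarrow> (1 / (16 * \<alpha>)) * (\<Sum>i=1..L. \<sigma> i * (\<phi> i - \<alpha> * (Cs + Cm))\<^sup>2)"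
        unfolding phh[OF conjunct1[OF conjunct2[OF h]]]
        by (rule d.rev_lim)
    qed
  qed
qed


end
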